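(* Let $p>\alpha+2>0$, assume $6p^2-11p+4\ge0$ and $p\neq\tfrac13$, and suppose $$\frac{6p^3-29p^2+17p-2-2p\sqrt{6p^2-11p+4}}{(3p-1)^2}\le\alpha\le\frac{6p^3-29p^2+17p-2+2p\sqrt{6p^2-11p+4}}{(3p-1)^2}.$$ Then $F_{p,\alpha}(r)\le 0$ for all $r\in(0,1]$, where $$F_{p,\alpha}(r)=r^{\,p-4-\frac{3\alpha}{2}}\int_0^{\frac{2r}{1+r}}\frac{t^{\frac{\alpha+2}{p}-1}}{(1-t)^{\frac{\alpha+2}{p}}}\,dt-\int_0^1\frac{t^{\frac{\alpha+2}{p}-1}}{(1-t)^{\frac{\alpha+2}{p}}}\,dt .$$
   Context: For $p>\alpha+2>0$ the integral $\int_0^1 t^{\frac{\alpha+2}{p}-1}(1-t)^{-\frac{\alpha+2}{p}}\,dt$ equals $B\!\left(\frac{\alpha+2}{p},1-\frac{\alpha+2}{p}\right)=\pi/\sin\frac{(\alpha+2)\pi}{p}$, so $F_{p,\alpha}$ is well defined on $(0,1]$. *)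

theory Defs
  imports "HOL-Analysis.Analysis"
begin

text \<open>The integrals are Henstock-Kurzweil integrals over [0,x]; the endpoints are
  a null set, and the integrand is nonnegative, so this coincides with the
  (improper / Lebesgue) integral of the paper.\<close>
definition Fint :: "real \<Rightarrow> real \<Rightarrow> real \<Rightarrow> real" where
  "Fint p \<alpha> t = t powr ((\<alpha> + 2) / p - 1) / (1 - t) powr ((\<alpha> + 2) / p)"

definition F :: "real \<Rightarrow> real \<Rightarrow> real \<Rightarrow> real" where
  "F p \<alpha> r = r powr (p - 4 - 3 * \<alpha> / 2) * integral {0 .. 2 * r / (1 + r)} (Fint p \<alpha>)
              - integral {0 .. 1} (Fint p \<alpha>)"

end

theory Submission
  imports Defs
begin


lemma alg_disc:
  fixes p \<alpha> :: real
  assumes "p > \<alpha> + 2" and "\<alpha> + 2 > 0"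
    and "6 * p^2 - 11 * p + 4 \<ge> 0" and "p \<noteq> 1 / 3"
    and "(6 * p^3 - 29 * p^2 + 17 * p - 2 - 2 * p * sqrt (6 * p^2 - 11 * p + 4)) / (3 * p - 1)^2 \<le> \<alpha>"
    and "\<alpha> \<le> (6 * p^3 - 29 * p^2 + 17 * p - 2 + 2 * p * sqrt (6 * p^2 - 11 * p + 4)) / (3 * p - 1)^2"
  defines "e \<equiv> p - 4 - 3 * \<alpha> / 2"
  shows "(\<alpha>+2-p)^2 - 4*(p*e+\<alpha>+2)*(p-p*e) \<le> 0"
proof -
  define S where "S = sqrt (6 * p^2 - 11 * p + 4)"
  define m where "m = (3*p-1)^2"
  define A0 where "A0 = 6 * p^3 - 29 * p^2 + 17 * p - 2"
  have S2: "S^2 = 6 * p^2 - 11 * p + 4" using assms(3) by (simp add: S_def)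
  have mpos: "m > 0" using assms(4) by (simp add: m_def)
  have h1: "m*\<alpha> - A0 + 2*p*S \<ge> 0"
    using assms(5) mpos unfolding S_def[symmetric] m_def[symmetric] A0_def[symmetric]
    by (simp add: divide_le_eq algebra_simps)
  have h2: "m*\<alpha> - A0 - 2*p*S \<le> 0"
    using assms(6) mpos unfolding S_def[symmetric] m_def[symmetric] A0_def[symmetric]
    by (simp add: le_divide_eq algebra_simps)
  have "(m*\<alpha> - A0 + 2*p*S) * (m*\<alpha> - A0 - 2*p*S) \<le> 0"
    using h1 h2 by (simp add: mult_nonneg_nonpos)
  moreover have "(m*\<alpha> - A0 + 2*p*S) * (m*\<alpha> - A0 - 2*p*S) = (m*\<alpha> - A0)^2 - 4*p^2*S^2"
    by (simp add: algebra_simps power2_eq_square)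
  ultimately have "(m*\<alpha> - A0)^2 - 4*p^2*(6 * p^2 - 11 * p + 4) \<le> 0"
    by (simp add: S2)
  moreover have "m * ((\<alpha>+2-p)^2 - 4*(p*e+\<alpha>+2)*(p-p*e)) = (m*\<alpha> - A0)^2 - 4*p^2*(6 * p^2 - 11 * p + 4)"
    unfolding m_def A0_def e_def by (simp add: algebra_simps power2_eq_square power3_eq_cube)
  ultimately show ?thesis using mpos
    by (metis mult_le_0_iff not_less)
qed

lemma quad_nonneg:
  fixes a b c r :: real
  assumes "b^2 - 4*a*c \<le> 0" "a + b + c > 0"
  shows "a + b*r + c*r^2 \<ge> 0"
proof (cases "c > 0")
  case True
  have "4*c*(a + b*r + c*r^2) = (2*c*r+b)^2 - (b^2 - 4*a*c)" by (simp add: algebra_simps power2_eq_square)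
  also have "\<dots> \<ge> 0" using assms(1) by (smt (verit) zero_le_power2)
  finally show ?thesis using True by (simp add: zero_le_mult_iff)
next
  case False
  have "4*c*(a + b + c) = (2*c+b)^2 - (b^2 - 4*a*c)" by (simp add: algebra_simps power2_eq_square)
  also have "\<dots> \<ge> 0" using assms(1) by (smt (verit) zero_le_power2)
  finally have "c \<ge> 0" using assms(2) by (simp add: zero_le_mult_iff)
  hence c0: "c = 0" using False by simp
  hence "b = 0" using assms(1) by simp
  thus ?thesis using c0 assms(2) by simp
qed



lemma an_main:
  fixes c e r :: real
  assumes c0: "0 < c" and c1: "c < 1"
    and Q: "\<And>r. 0 \<le> (e+c) + (c-1)*r + (1-e)*r^2"
    and r: "0 < r" "r \<le> 1"
  shows "r powr e * integral {0..2*r/(1+r)} (\<lambda>t. t powr (c-1) / (1-t) powr c)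
         \<le> integral {0..1} (\<lambda>t. t powr (c-1) / (1-t) powr c)"
proof -
  define f where "f = (\<lambda>t::real. t powr (c-1) / (1-t) powr c)"
  have feq: "f = (\<lambda>t. t powr (c - 1) * (1 - t) powr ((1-c) - 1))"
    by (auto simp: f_def powr_minus_divide)
  have fint: "f integrable_on {0..1}"
    unfolding feq using integrable_Beta'[of c "1-c"] c0 c1 by simp
  define I where "I = (\<lambda>x. integral {0..x} f)"
  have Icont: "continuous_on {0..1} I"
    unfolding I_def by (rule indefinite_integral_continuous_1[OF fint])
  have Ider: "(I has_real_derivative f x) (at x)" if "0 < x" "x < 1" for x
  proof -
    have "continuous (at x) f" unfolding f_def using that
      by (intro continuous_intros) auto
    hence "continuous (at x within ({0..1} - {})) f"
      by (simp add: continuous_at_imp_continuous_within)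
    from integral_has_vector_derivative_continuous_at[OF fint _ _ this]
    have "(I has_vector_derivative f x) (at x within {0..1})"
      using that by (simp add: I_def)
    moreover have "at x within {0..1} = at x" using that by (simp add: at_within_Icc_at)
    ultimately show ?thesis by (simp add: has_real_derivative_iff_has_vector_derivative)
  qed
  define X where "X = (\<lambda>r::real. 2*r/(1+r))"
  define \<phi> where "\<phi> = (\<lambda>r::real. 2 powr c * r powr c / ((1+r) * (1-r) powr c))"
  define H where "H = (\<lambda>r. e * I (X r) + \<phi> r)"
  have pw: "x powr (c-1) = x powr c / x" if "x > 0" for x :: real
    using that by (simp add: powr_diff)
  have key: "f (X r) * (2/(1+r)^2) = \<phi> r / r" if "0 < r" "r < 1" for r
  proof -
    have 1: "1 - X r = (1-r)/(1+r)" using that by (simp add: X_def field_simps)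
    have "f (X r) = (2 * r) powr (c-1) / (1+r) powr (c-1) / ((1-r) powr c / (1+r) powr c)"
      unfolding f_def 1 using that by (simp add: X_def powr_divide)
    also have "\<dots> = 2 powr c * r powr c / (2*r) / ((1+r) powr c / (1+r)) / ((1-r) powr c / (1+r) powr c)"
      using that by (simp add: pw powr_mult)
    also have "\<dots> = 2 powr c * r powr c * (1+r) / (2*r*(1-r) powr c)"
    proof -
      have "(1+r) powr c > 0" "(1-r) powr c > 0" using that by auto
      thus ?thesis using that by (simp add: field_simps)
    qed
    finally have fx: "f (X r) = 2 powr c * r powr c * (1+r) / (2*r*(1-r) powr c)" .
    have gen: "A*(1+r)/(2*r*D)*(2/(1+r)^2) = A/((1+r)*D)/r" if "D > 0" for A D :: real
    proof -
      have "1 + r \<noteq> 0" "r \<noteq> 0" using \<open>0 < r\<close> by auto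
      have "A*(1+r)/(2*r*D)*(2/(1+r)^2) = ((1+r)*2 * A) / ((1+r)*2 * (r*D*(1+r)))"
        by (simp add: times_divide_times_eq power2_eq_square mult_ac)
      also have "\<dots> = A / (r*D*(1+r))"
        using \<open>1 + r \<noteq> 0\<close> by (subst mult_divide_mult_cancel_left) auto
      also have "\<dots> = A/((1+r)*D)/r" by (simp add: divide_divide_eq_left mult_ac)
      finally show ?thesis .
    qed
    have "(1-r) powr c > 0" using that by auto
    from gen[OF this, of "2 powr c * r powr c"] show ?thesis unfolding fx \<phi>_def by (simp add: mult.assoc)
  qed
  have Xin: "0 < X r \<and> X r < 1" if "0 < r" "r < 1" for r
    using that by (simp add: X_def field_simps)
  have Xder: "(X has_real_derivative 2/(1+r)^2) (at r)" if "0 < r" for r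
    unfolding X_def using that
    by (auto intro!: derivative_eq_intros simp: field_simps power2_eq_square)
  have IXder: "((\<lambda>r. I (X r)) has_real_derivative \<phi> r / r) (at r)" if "0 < r" "r < 1" for r
    using DERIV_chain2[OF Ider[of "X r"] Xder[of r]] Xin[OF that] key[OF that] that by simp
  have \<phi>der: "(\<phi> has_real_derivative \<phi> r * (c/r - 1/(1+r) + c/(1-r))) (at r)" if "0 < r" "r < 1" for r
  proof -
    have gen: "(c * a * k * (u * b) / r - k * a * (b - c * b * u / v)) / (u * b * (u * b))
       = k * a * (c / r - 1 / u + c / v) / (u * b)"
      if "u \<noteq> 0" "v \<noteq> 0" "r \<noteq> 0" "b \<noteq> 0" for a b k u v r :: real
      using that by (simp add: field_simps)
    have "(1-r) powr c > 0" "1 + r \<noteq> 0" "1 - r \<noteq> 0" using that by auto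
    show ?thesis unfolding \<phi>_def using that \<open>(1-r) powr c > 0\<close>
      apply (auto intro!: derivative_eq_intros simp: pw)
      apply (rule gen)
      using that by auto
  qed
  have \<phi>nn: "\<phi> r \<ge> 0" if "0 \<le> r" "r \<le> 1" for r
    unfolding \<phi>_def using that by (intro divide_nonneg_nonneg mult_nonneg_nonneg) auto
  have brk: "e + c - r/(1+r) + c*r/(1-r) \<ge> 0" if "0 < r" "r < 1" for r
  proof -
    have "1 + r \<noteq> 0" "1 - r \<noteq> 0" using that by auto
    hence "e + c - r/(1+r) + c*r/(1-r) = ((e+c) + (c-1)*r + (1-e)*r^2)/((1+r)*(1-r))"
      by (simp add: field_simps power2_eq_square)
    also have "\<dots> \<ge> 0" using Q[of r] that by (intro divide_nonneg_pos) auto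
    finally show ?thesis .
  qed
  have Hder: "(H has_real_derivative \<phi> r / r * (e + c - r/(1+r) + c*r/(1-r))) (at r)"
    if "0 < r" "r < 1" for r
  proof -
    have d: "(H has_real_derivative e * (\<phi> r / r) + \<phi> r * (c/r - 1/(1+r) + c/(1-r))) (at r)"
      unfolding H_def using that by (intro DERIV_add DERIV_cmult IXder \<phi>der)
    have gen: "e * (P / r) + P * (c/r - 1/u + c/v) = P / r * (e + c - r/u + c*r/v)"
      if "u \<noteq> 0" "v \<noteq> 0" "r \<noteq> 0" for P u v r :: real
      using that by (simp add: field_simps)
    moreover have "e * (\<phi> r / r) + \<phi> r * (c/r - 1/(1+r) + c/(1-r)) = \<phi> r / r * (e + c - r/(1+r) + c*r/(1-r))"
      using that by (intro gen) auto
    ultimately show ?thesis using d by simp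
  qed
  have IXcont: "continuous_on {a..b} (\<lambda>r. I (X r))" if "0 \<le> a" "b \<le> 1" for a b
  proof (rule continuous_on_compose2[OF Icont])
    show "continuous_on {a..b} X" unfolding X_def using that by (intro continuous_intros) auto
    show "X ` {a..b} \<subseteq> {0..1}" using that by (auto simp: X_def field_simps)
  qed
  have \<phi>cont: "continuous_on {0..s} \<phi>" if "s < 1" for s
    unfolding \<phi>_def using that c0
    by (intro continuous_intros continuous_on_powr') auto
  have H0: "H 0 = 0" by (simp add: H_def X_def I_def \<phi>_def)
  have Hnn: "H s \<ge> 0" if "0 < s" "s < 1" for s
  proof -
    have "H 0 \<le> H s"
    proof (rule DERIV_nonneg_imp_increasing_open[of 0 s H])
      show "0 \<le> s" using that by simp
      show "\<exists>y. DERIV H x :> y \<and> y \<ge> 0" if "0 < x" "x < s" for x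
        using Hder[of x] brk[of x] \<phi>nn[of x] that \<open>s < 1\<close> by (intro exI[of _ "\<phi> x / x * (e + c - x/(1+x) + c*x/(1-x))"]) auto
      show "continuous_on {0..s} H" unfolding H_def using that
        by (intro continuous_intros IXcont \<phi>cont) auto
    qed
    thus ?thesis using H0 by simp
  qed
  define G where "G = (\<lambda>r. r powr e * I (X r))"
  have "G r \<le> G 1"
  proof (rule DERIV_nonneg_imp_increasing_open[of r 1 G])
    show "r \<le> 1" using r by simp
    show "\<exists>y. DERIV G x :> y \<and> y \<ge> 0" if "r < x" "x < 1" for x
    proof -
      have x0: "0 < x" using that r by simp
      have "(G has_real_derivative e * x powr (e - 1) * I (X x) + x powr e * (\<phi> x / x)) (at x)"
        unfolding G_def using that x0
        by (auto intro!: derivative_eq_intros IXder)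
      moreover have "e * x powr (e - 1) * I (X x) + x powr e * (\<phi> x / x) = x powr e / x * H x"
        using x0 by (simp add: H_def powr_diff field_simps)
      moreover have "x powr e / x * H x \<ge> 0" using Hnn[of x] x0 that by simp
      ultimately show ?thesis by auto
    qed
    show "continuous_on {r..1} G" unfolding G_def using r
      by (intro continuous_intros IXcont) auto
  qed
  moreover have "G 1 = integral {0..1} f" by (simp add: G_def X_def I_def)
  ultimately show ?thesis by (simp add: G_def X_def I_def f_def)
qed


theorem lemma2p3:
  fixes p \<alpha> :: real
  assumes "p > \<alpha> + 2" and "\<alpha> + 2 > 0"
    and "6 * p^2 - 11 * p + 4 \<ge> 0" and "p \<noteq> 1 / 3"
    and "(6 * p^3 - 29 * p^2 + 17 * p - 2 - 2 * p * sqrt (6 * p^2 - 11 * p + 4)) / (3 * p - 1)^2 \<le> \<alpha>"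
    and "\<alpha> \<le> (6 * p^3 - 29 * p^2 + 17 * p - 2 + 2 * p * sqrt (6 * p^2 - 11 * p + 4)) / (3 * p - 1)^2"
  shows "\<forall>r \<in> {0<..1}. F p \<alpha> r \<le> 0"
proof
  fix r :: real assume r: "r \<in> {0<..1}"
  define c where "c = (\<alpha> + 2) / p"
  define e where "e = p - 4 - 3 * \<alpha> / 2"
  have p0: "p > 0" using assms(1,2) by simp
  have c0: "0 < c" and c1: "c < 1" using assms(1,2) p0 by (auto simp: c_def field_simps)
  have disc: "(\<alpha>+2-p)^2 - 4*(p*e+\<alpha>+2)*(p-p*e) \<le> 0"
    unfolding e_def by (rule alg_disc[OF assms])
  have Q: "0 \<le> (e+c) + (c-1)*x + (1-e)*x^2" for x
  proof -
    have "0 \<le> (p*e+\<alpha>+2) + (\<alpha>+2-p)*x + (p-p*e)*x^2"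
      using disc assms(2) by (intro quad_nonneg) (auto simp: power2_eq_square algebra_simps)
    also have "(p*e+\<alpha>+2) + (\<alpha>+2-p)*x + (p-p*e)*x^2 = p * ((e+c) + (c-1)*x + (1-e)*x^2)"
      using p0 by (simp add: c_def field_simps)
    finally show ?thesis using p0 by (simp add: zero_le_mult_iff)
  qed
  have fe: "Fint p \<alpha> = (\<lambda>t. t powr (c-1) / (1-t) powr c)"
    by (simp add: Fint_def c_def fun_eq_iff)
  have "r powr e * integral {0..2*r/(1+r)} (\<lambda>t. t powr (c-1) / (1-t) powr c)
         \<le> integral {0..1} (\<lambda>t. t powr (c-1) / (1-t) powr c)"
    using an_main[OF c0 c1 Q] r by auto
  thus "F p \<alpha> r \<le> 0" unfolding F_def fe e_def by simp
qed

end
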